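(* Let $p_{NS}\in(0,1)$ and let $p_0$ be such that $p_{NS}=p_0(1-p_0)^{(1-p_0)/p_0}$. Let $P$ be a probability distribution on a finite set $\mathcal{I}$ with $\min_{i\in\sup(P)}P(i)\ge p_{NS}$. Then for every minimizer $Q^*$ of $\mathrm{KL}_b(P\|\cdot)$ over semi-distributions and every $i\in\sup(Q^* )$, $$\frac{Q^*(i)}{P(i)}\le\frac{p_0}{(1-p_0)p_{NS}}<\frac{3}{1-p_0}.$$
   Context: A semi-distribution on $\mathcal{I}$ is $W:\mathcal{I}\to[0,1]$ with $\sum_iW(i)\le1$ and support $\sup(W)=\{i:W(i)>0\}$; a probability distribution is one summing to $1$. Bounded KL with threshold $p_{NS}$: $\mathrm{KL}_b(P\|Q):=\sum_{i\in\sup(P)}P(i)\ln\frac{P(i)}{\max(Q(i),p_{NS})}$. *)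

theory Defs
  imports Complex_Main
begin

text \<open>Functions on a finite index set I, represented as 'a \<Rightarrow> real;
  only the values on I matter.\<close>

definition semidist :: "'a set \<Rightarrow> ('a \<Rightarrow> real) \<Rightarrow> bool" where
  "semidist I W \<longleftrightarrow> (\<forall>i\<in>I. 0 \<le> W i \<and> W i \<le> 1) \<and> (\<Sum>i\<in>I. W i) \<le> 1"

definition probdist :: "'a set \<Rightarrow> ('a \<Rightarrow> real) \<Rightarrow> bool" where
  "probdist I W \<longleftrightarrow> semidist I W \<and> (\<Sum>i\<in>I. W i) = 1"

definition supp :: "'a set \<Rightarrow> ('a \<Rightarrow> real) \<Rightarrow> 'a set" where
  "supp I W = {i \<in> I. W i > 0}"

definition KLb :: "real \<Rightarrow> 'a set \<Rightarrow> ('a \<Rightarrow> real) \<Rightarrow> ('a \<Rightarrow> real) \<Rightarrow> real" where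
  "KLb pNS I P Q = (\<Sum>i\<in>supp I P. P i * ln (P i / max (Q i) pNS))"

definition KLb_minimizer :: "real \<Rightarrow> 'a set \<Rightarrow> ('a \<Rightarrow> real) \<Rightarrow> ('a \<Rightarrow> real) \<Rightarrow> bool" where
  "KLb_minimizer pNS I P Q \<longleftrightarrow> semidist I Q \<and>
     (\<forall>Q'. semidist I Q' \<longrightarrow> KLb pNS I P Q \<le> KLb pNS I P Q')"

end

theory Submission
  imports Defs
begin

lemma phi_mono:
  fixes a b :: real
  assumes "0 < a" "a < b" "b < 1"
  shows "ln a + ((1-a)/a) * ln(1-a) < ln b + ((1-b)/b) * ln(1-b)"
proof -
  have "\<exists>y. DERIV (\<lambda>x. ln x + ((1-x)/x) * ln(1-x)) x :> y \<and> y > 0" if "a \<le> x" "x \<le> b" for x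
  proof -
    have x0: "0 < x" "x < 1" using that assms by auto
    have "DERIV (\<lambda>x. ln x + ((1-x)/x) * ln(1-x)) x :> - ln(1-x) / (x*x)"
      using x0 by (auto intro!: derivative_eq_intros simp: field_simps)
    moreover have "- ln(1-x) / (x*x) > 0"
    proof -
      have "ln (1-x) < 0" using x0 by simp
      moreover have "x*x > 0" using x0 by simp
      ultimately have "ln(1-x) / (x*x) < 0" by (rule divide_neg_pos)
      then show ?thesis by simp
    qed
    ultimately show ?thesis by auto
  qed
  then show ?thesis using DERIV_pos_imp_increasing[OF assms(2)] by blast
qed

lemma add_gain:
  fixes m p q p0 :: real
  assumes "0 < m" "0 < q" "q \<le> p" "0 < p0" "p0 < 1"
    and lq: "ln q = ln p0 + ((1-p0)/p0) * ln(1-p0)"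
    and mlt: "m < (1-p0) * q / p0"
  shows "(m+p) * ln(m+p) < m * ln m + p * ln(p/q)"
proof -
  define b where "b = p/(m+p)"
  have p0: "0 < p" using assms by auto
  have b1: "b < 1" "0 < b" using assms p0 unfolding b_def by (auto simp: field_simps)
  have "m * p0 < (1-p0) * q" using mlt assms by (simp add: field_simps)
  also have "\<dots> \<le> (1-p0) * p" using assms by auto
  finally have "p0 < b" unfolding b_def using assms p0 by (simp add: field_simps)
  then have ph: "ln p0 + ((1-p0)/p0) * ln(1-p0) < ln b + ((1-b)/b) * ln(1-b)"
    using phi_mono assms b1 by blast
  have e1: "1 - b = m/(m+p)" unfolding b_def using assms p0 by (simp add: field_simps)
  have e2: "(1-b)/b = m/p" unfolding b_def using assms p0 by (simp add: divide_simps)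
  have XA: "p * (ln b + ((1-b)/b) * ln(1-b)) = p * ln p + m * ln m - (m+p) * ln(m+p)"
  proof -
    have lb: "ln b = ln p - ln (m+p)" unfolding b_def using assms p0 by (simp add: ln_div)
    have l1b: "ln (1-b) = ln m - ln (m+p)" unfolding e1 using assms p0 by (simp add: ln_div)
    have pr: "p * (ln b + m/p * ln (1-b)) = p * ln b + m * ln (1-b)" using p0 by (simp add: field_simps)
    show ?thesis unfolding e2 pr lb l1b by (simp add: algebra_simps)
  qed
  have XB: "p * ln q < p * (ln b + ((1-b)/b) * ln(1-b))" using ph lq p0 by simp
  have "p * ln (p/q) = p * ln p - p * ln q" using assms p0 by (simp add: ln_div right_diff_distrib)
  then show ?thesis using XA XB by linarith
qed

lemma ln_strict: "0 < (x::real) \<Longrightarrow> x \<noteq> 1 \<Longrightarrow> ln x < x - 1"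
  using ln_le_minus_one ln_eq_minus_one by force

lemma struct_KL:
  fixes P :: "'a \<Rightarrow> real"
  assumes fin: "finite I" and S: "S = supp I P" and B: "B \<subseteq> S"
    and M: "M = sum P B" "0 < M" "M \<le> 1" and pos: "0 < pNS"
    and big: "\<forall>j\<in>S. P j \<ge> pNS"
  shows "semidist I (\<lambda>k. if k \<in> B then P k / M else 0)"
    "KLb pNS I P (\<lambda>k. if k \<in> B then P k / M else 0) = M * ln M + (\<Sum>j\<in>S - B. P j * ln (P j / pNS))"
proof -
  have SI: "S \<subseteq> I" unfolding S supp_def by auto
  have finS: "finite S" using SI fin finite_subset by blast
  have finB: "finite B" using B finS finite_subset by blast
  have Ppos: "\<And>j. j \<in> S \<Longrightarrow> P j > 0" unfolding S supp_def by auto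
  have le: "P k \<le> M" if "k \<in> B" for k
  proof -
    have "\<forall>x\<in>B. P x \<ge> 0" using B Ppos by (meson less_imp_le subsetD)
    then show ?thesis unfolding M(1) using that finB by (intro member_le_sum) auto
  qed
  have "(\<Sum>k\<in>I. if k \<in> B then P k / M else 0) = (\<Sum>k\<in>I \<inter> B. P k / M)"
    using sum.inter_restrict[OF fin, of "\<lambda>k. P k / M" B] by simp
  also have "I \<inter> B = B" using B SI by auto
  also have "(\<Sum>k\<in>B. P k / M) = 1" using M by (simp add: sum_divide_distrib[symmetric])
  finally show "semidist I (\<lambda>k. if k \<in> B then P k / M else 0)"
    unfolding semidist_def using le M Ppos B by (auto simp: divide_le_eq_1 less_imp_le)
  have "KLb pNS I P (\<lambda>k. if k \<in> B then P k / M else 0)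
     = (\<Sum>j\<in>S. P j * ln (P j / max (if j \<in> B then P j / M else 0) pNS))"
    unfolding KLb_def S by simp
  also have "\<dots> = (\<Sum>j\<in>S - B. P j * ln (P j / max (if j \<in> B then P j / M else 0) pNS))
      + (\<Sum>j\<in>B. P j * ln (P j / max (if j \<in> B then P j / M else 0) pNS))"
    by (rule sum.subset_diff[OF B finS])
  also have "(\<Sum>j\<in>S - B. P j * ln (P j / max (if j \<in> B then P j / M else 0) pNS))
      = (\<Sum>j\<in>S - B. P j * ln (P j / pNS))"
    using pos by (intro sum.cong) auto
  also have "(\<Sum>j\<in>B. P j * ln (P j / max (if j \<in> B then P j / M else 0) pNS))
      = (\<Sum>j\<in>B. P j * ln M)"
  proof (intro sum.cong refl)
    fix j assume j: "j \<in> B"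
    have Pj: "P j > 0" "P j \<ge> pNS" using j B Ppos big by auto
    have "P j \<le> P j / M" using Pj M by (simp add: le_divide_eq)
    then have "max (if j \<in> B then P j / M else 0) pNS = P j / M" using j Pj by auto
    then show "P j * ln (P j / max (if j \<in> B then P j / M else 0) pNS) = P j * ln M"
      using Pj M by simp
  qed
  also have "(\<Sum>j\<in>B. P j * ln M) = M * ln M" using M by (simp add: sum_distrib_right)
  finally show "KLb pNS I P (\<lambda>k. if k \<in> B then P k / M else 0) = M * ln M + (\<Sum>j\<in>S - B. P j * ln (P j / pNS))"
    by simp
qed


theorem lemma11:
  fixes pNS p0 :: real and I :: "'a set" and P Q :: "'a \<Rightarrow> real"
  assumes "0 < pNS" "pNS < 1"
    and "0 < p0" "p0 < 1"
    and "pNS = p0 * (1 - p0) powr ((1 - p0) / p0)"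
    and "finite I"
    and "probdist I P"
    and "\<forall>i\<in>supp I P. P i \<ge> pNS"
    and "KLb_minimizer pNS I P Q"
    and "i \<in> supp I Q"
  shows "Q i / P i \<le> p0 / ((1 - p0) * pNS) \<and> p0 / ((1 - p0) * pNS) < 3 / (1 - p0)"
proof -
  note pos = assms(1) and p0 = assms(3,4) and fin = assms(6)
  define t where "t = (1 - p0) powr ((1 - p0) / p0)"
  have t0: "t > 0" unfolding t_def using p0 by simp
  have pNSt: "pNS = p0 * t" using assms(5) t_def by simp
  have lnt: "ln t = ((1 - p0) / p0) * ln (1 - p0)" unfolding t_def using p0 by (simp add: ln_powr)
  have lq: "ln pNS = ln p0 + ((1-p0)/p0) * ln(1-p0)" using pNSt lnt p0 t0 by (simp add: ln_mult)
  have t1: "t \<le> 1" unfolding t_def using p0 by (intro powr_le1) auto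
  have "ln (1/(1-p0)) < 1/(1-p0) - 1" using p0 by (intro ln_strict) auto
  then have "- ln (1-p0) < p0/(1-p0)" using p0 by (simp add: ln_div field_simps)
  then have "- ln (1-p0) * ((1-p0)/p0) < p0/(1-p0) * ((1-p0)/p0)"
    using p0 by (intro mult_strict_right_mono) auto
  then have "ln t > -1" unfolding lnt using p0 by (simp add: field_simps)
  then have "exp (-1) < exp (ln t)" by (simp only: exp_less_cancel_iff)
  then have "exp (-1) < t" using t0 by simp
  moreover have "exp (-1) \<ge> 1/(3::real)" using exp_le by (simp add: exp_minus field_simps)
  ultimately have t3: "1/3 < t" by linarith
  have c_eq: "p0 / ((1 - p0) * pNS) = 1 / ((1-p0) * t)" using pNSt p0 by simp
  have part2: "p0 / ((1 - p0) * pNS) < 3 / (1 - p0)"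
  proof -
    have "(1-p0) * 1 < (1-p0) * (3*t)" using t3 p0 by (intro mult_strict_left_mono) auto
    then show ?thesis unfolding c_eq using t3 p0 t0 by (simp add: field_simps)
  qed
  define c where "c = p0 / ((1 - p0) * pNS)"
  have c1: "c > 1"
  proof -
    have h: "(1-p0)*t \<le> 1-p0" using mult_left_mono[OF t1, of "1-p0"] p0 by simp
    have "(1-p0)*t < 1" using h p0(1) by linarith
    moreover have "(1-p0)*t > 0" using p0 t0 by simp
    ultimately show ?thesis unfolding c_def c_eq by simp
  qed
  have cinv: "1 / c = (1-p0) * pNS / p0" unfolding c_def by simp
  define S where "S = supp I P"
  have SI: "S \<subseteq> I" unfolding S_def supp_def by auto
  have finS: "finite S" using SI fin finite_subset by blast
  have Pnn: "\<And>j. j \<in> I \<Longrightarrow> P j \<ge> 0" using assms(7) unfolding probdist_def semidist_def by auto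
  have Qnn: "\<And>j. j \<in> I \<Longrightarrow> Q j \<ge> 0" using assms(9) unfolding KLb_minimizer_def semidist_def by auto
  have Qsum: "sum Q I \<le> 1" using assms(9) unfolding KLb_minimizer_def semidist_def by auto
  have Ppos: "\<And>j. j \<in> S \<Longrightarrow> P j > 0" unfolding S_def supp_def by auto
  have big: "\<forall>j\<in>S. P j \<ge> pNS" using assms(8) S_def by simp
  have sumS: "sum P S = 1"
  proof -
    have "sum P S = sum P I"
      using Pnn by (intro sum.mono_neutral_left[OF fin SI]) (force simp: S_def supp_def)
    then show ?thesis using assms(7) unfolding probdist_def by simp
  qed
  have min: "\<And>Q'. semidist I Q' \<Longrightarrow> KLb pNS I P Q \<le> KLb pNS I P Q'"
    using assms(9) unfolding KLb_minimizer_def by auto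
  have iI: "i \<in> I" using assms(10) unfolding supp_def by auto
  have part1: "Q i / P i \<le> c"
  proof (rule ccontr)
    assume H: "\<not> Q i / P i \<le> c"
    have Pi: "P i > 0"
    proof (rule ccontr)
      assume "\<not> P i > 0"
      then have "P i = 0" using Pnn[OF iI] by simp
      then show False using H c1 by simp
    qed
    then have iS: "i \<in> S" using iI unfolding S_def supp_def by auto
    have Qi: "Q i > c * P i" using H Pi by (simp add: field_simps)
    define A where "A = {j \<in> S. Q j \<ge> pNS}"
    define m where "m = sum P A"
    have AS: "A \<subseteq> S" unfolding A_def by auto
    have finA: "finite A" using AS finS finite_subset by blast
    have "c * P i \<ge> P i" using c1 Pi by simp
    then have iA: "i \<in> A" unfolding A_def using iS big Qi by auto
    have m0: "m \<ge> P i" unfolding m_def using iA finA AS Ppos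
      by (intro member_le_sum) (auto simp: less_imp_le)
    then have mpos: "m > 0" using Pi by simp
    have "sum P A \<le> sum P S" by (rule sum_mono2[OF finS AS]) (simp add: Ppos less_imp_le)
    then have m1: "m \<le> 1" unfolding m_def using sumS by simp
    have QA: "\<And>j. j \<in> A \<Longrightarrow> Q j > 0 \<and> Q j \<ge> pNS" unfolding A_def using pos by auto
    define R where "R = (\<Sum>j\<in>S - A. P j * ln (P j / pNS))"
    define G where "G = (\<Sum>j\<in>A. P j * ln (P j / Q j))"
    have KQ: "KLb pNS I P Q = G + R"
    proof -
      have "KLb pNS I P Q = (\<Sum>j\<in>S - A. P j * ln (P j / max (Q j) pNS))
           + (\<Sum>j\<in>A. P j * ln (P j / max (Q j) pNS))"
        unfolding KLb_def S_def[symmetric] using sum.subset_diff[OF AS finS] by simp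
      also have "(\<Sum>j\<in>S - A. P j * ln (P j / max (Q j) pNS)) = R"
        unfolding R_def by (intro sum.cong) (auto simp: A_def)
      also have "(\<Sum>j\<in>A. P j * ln (P j / max (Q j) pNS)) = G"
        unfolding G_def using QA by (intro sum.cong) auto
      finally show ?thesis by simp
    qed
    define f where "f j = P j * ln (m * Q j / P j)" for j
    define g where "g j = m * Q j - P j" for j
    have fg: "f j \<le> g j" if "j \<in> A" for j
    proof -
      have pj: "P j > 0" "Q j > 0" using that AS Ppos QA by auto
      have "ln (m * Q j / P j) \<le> m * Q j / P j - 1" using pj mpos by (intro ln_le_minus_one) simp
      then have "P j * ln (m * Q j / P j) \<le> P j * (m * Q j / P j - 1)" using pj by simp
      moreover have "P j * (m * Q j / P j - 1) = m * Q j - P j" using pj by (simp add: field_simps)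
      ultimately show ?thesis unfolding f_def g_def by simp
    qed
    have Gf: "G = m * ln m - sum f A"
    proof -
      have "G = (\<Sum>j\<in>A. P j * ln m - f j)"
        unfolding G_def
      proof (intro sum.cong refl)
        fix j assume "j \<in> A"
        then have pj: "P j > 0" "Q j > 0" using AS Ppos QA by auto
        have "ln (P j / Q j) = ln m - ln (m * Q j / P j)" using pj mpos by (simp add: ln_div ln_mult)
        then show "P j * ln (P j / Q j) = P j * ln m - f j" unfolding f_def by (simp add: right_diff_distrib)
      qed
      also have "\<dots> = m * ln m - sum f A" unfolding m_def by (simp add: sum_subtractf sum_distrib_right)
      finally show ?thesis .
    qed
    have gle: "sum g A \<le> 0"
    proof -
      have "sum Q A \<le> sum Q I" using AS SI fin Qnn by (intro sum_mono2) auto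
      then have "sum Q A \<le> 1" using Qsum by simp
      then have "m * sum Q A \<le> m * 1" using mpos by (intro mult_left_mono) auto
      then show ?thesis unfolding g_def m_def by (simp add: sum_subtractf sum_distrib_left m_def)
    qed
    show False
    proof (cases "m \<ge> 1 / c")
      case True
      have "f i < g i"
      proof -
        have "m * c \<ge> 1" using True c1 by (simp add: field_simps)
        have "m * Q i > m * (c * P i)" using Qi mpos by (intro mult_strict_left_mono) auto
        moreover have "m * (c * P i) = (m * c) * P i" by simp
        moreover have "(m * c) * P i \<ge> 1 * P i" using \<open>m * c \<ge> 1\<close> Pi by (intro mult_right_mono) auto
        ultimately have "m * Q i > P i" by linarith
        then have x1: "m * Q i / P i > 1" using Pi by simp
        then have "ln (m * Q i / P i) < m * Q i / P i - 1" by (intro ln_strict) auto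
        then have "P i * ln (m * Q i / P i) < P i * (m * Q i / P i - 1)" using Pi by simp
        moreover have "P i * (m * Q i / P i - 1) = m * Q i - P i" using Pi by (simp add: field_simps)
        ultimately show ?thesis unfolding f_def g_def by simp
      qed
      then have "sum f A < sum g A" using fg iA finA by (intro sum_strict_mono_ex1) auto
      then have "G > m * ln m" using Gf gle by simp
      moreover have "KLb pNS I P Q \<le> m * ln m + R"
        using min[OF struct_KL(1)[OF fin S_def AS m_def mpos m1 pos big]]
          struct_KL(2)[OF fin S_def AS m_def mpos m1 pos big] unfolding R_def by simp
      ultimately show False using KQ by simp
    next
      case False
      then have mc: "m < (1-p0) * pNS / p0" using cinv by simp
      have "1 / c < 1" using c1 by simp
      then have "m < 1" using False by linarith
      have "S - A \<noteq> {}"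
      proof
        assume "S - A = {}"
        then have "A = S" using AS by auto
        then show False using sumS \<open>m < 1\<close> unfolding m_def by simp
      qed
      then obtain j where j: "j \<in> S - A" by blast
      define p where "p = P j"
      have pj: "p \<ge> pNS" "p > 0" using j big Ppos unfolding p_def by auto
      define B where "B = insert j A"
      have BS: "B \<subseteq> S" using j AS B_def by auto
      have mB: "m + p = sum P B" unfolding B_def m_def p_def using j finA by simp
      have "sum P B \<le> sum P S" by (rule sum_mono2[OF finS BS]) (simp add: Ppos less_imp_le)
      then have mB1: "m + p \<le> 1" unfolding mB using sumS by simp
      have mBp: "0 < m + p" using mpos pj by simp
      have SB: "S - B = (S - A) - {j}" unfolding B_def by auto
      have "R = p * ln (p / pNS) + (\<Sum>k\<in>S - B. P k * ln (P k / pNS))"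
        unfolding R_def SB p_def using j finS by (simp add: sum.remove)
      moreover have "KLb pNS I P Q \<le> (m + p) * ln (m + p) + (\<Sum>k\<in>S - B. P k * ln (P k / pNS))"
        using min[OF struct_KL(1)[OF fin S_def BS mB mBp mB1 pos big]]
          struct_KL(2)[OF fin S_def BS mB mBp mB1 pos big] by simp
      moreover have "(m+p) * ln(m+p) < m * ln m + p * ln(p/pNS)"
        using add_gain[OF mpos pos pj(1) p0 lq mc] .
      moreover have "sum f A \<le> sum g A" using fg by (intro sum_mono) auto
      moreover have "G \<ge> m * ln m" using Gf gle calculation by linarith
      ultimately show False using KQ by linarith
    qed
  qed
  show ?thesis using part1 part2 unfolding c_def by simp
qed

end
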